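(* Let $G$ be any graph and let $vw$ be an edge of $G$ that belongs to two different bicliques of $G$. Then, after possibly interchanging the names of $v$ and $w$, at least one of the following holds: (a) there exist vertices $v_1,w_1$ such that $v v_1$ and $w w_1$ are edges, while $v w_1$, $w v_1$ and $v_1 w_1$ are non-edges; or (b) there exist vertices $v_1,v_2$ such that $v v_1$, $v v_2$ and $v_1v_2$ are edges, while $w v_1$ and $w v_2$ are non-edges.
   Context: All graphs are finite, simple and undirected. A biclique of a graph $G$ is a maximal (with respect to inclusion) induced subgraph of $G$ that is a complete bipartite graph $K_{p,q}$ with $p,q\ge 1$. *)

theory Defs
  imports Main
begin

definition simple_graph :: "'a set \<Rightarrow> ('a \<Rightarrow> 'a \<Rightarrow> bool) \<Rightarrow> bool" where
  "simple_graph V E \<longleftrightarrow> finite V \<and> (\<forall>x y. E x y \<longrightarrow> x \<in> V \<and> y \<in> V)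
     \<and> (\<forall>x y. E x y \<longrightarrow> E y x) \<and> (\<forall>x. \<not> E x x)"

definition induces_complete_bipartite :: "'a set \<Rightarrow> ('a \<Rightarrow> 'a \<Rightarrow> bool) \<Rightarrow> 'a set \<Rightarrow> bool" where
  "induces_complete_bipartite V E S \<longleftrightarrow> S \<subseteq> V \<and>
     (\<exists>A B. S = A \<union> B \<and> A \<inter> B = {} \<and> A \<noteq> {} \<and> B \<noteq> {} \<and>
        (\<forall>x\<in>A. \<forall>y\<in>A. \<not> E x y) \<and> (\<forall>x\<in>B. \<forall>y\<in>B. \<not> E x y) \<and>
        (\<forall>x\<in>A. \<forall>y\<in>B. E x y))"

definition biclique :: "'a set \<Rightarrow> ('a \<Rightarrow> 'a \<Rightarrow> bool) \<Rightarrow> 'a set \<Rightarrow> bool" where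
  "biclique V E S \<longleftrightarrow> induces_complete_bipartite V E S \<and>
     (\<forall>T. S \<subset> T \<longrightarrow> \<not> induces_complete_bipartite V E T)"

end

theory Submission
  imports Defs
begin

lemma bic_eq:
  assumes sg: "simple_graph V E" and vw: "E v w"
    and na: "\<And>x1 y1. E v x1 \<Longrightarrow> E w y1 \<Longrightarrow> \<not> E v y1 \<Longrightarrow> \<not> E w x1 \<Longrightarrow> E x1 y1"
    and nbv: "\<And>x1 x2. E v x1 \<Longrightarrow> E v x2 \<Longrightarrow> \<not> E w x1 \<Longrightarrow> \<not> E w x2 \<Longrightarrow> \<not> E x1 x2"
    and nbw: "\<And>x1 x2. E w x1 \<Longrightarrow> E w x2 \<Longrightarrow> \<not> E v x1 \<Longrightarrow> \<not> E v x2 \<Longrightarrow> \<not> E x1 x2"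
    and bS: "biclique V E S" and sub: "{v, w} \<subseteq> S"
  shows "S = {x. E v x \<and> \<not> E w x} \<union> {y. E w y \<and> \<not> E v y}"
proof -
  let ?X = "{x. E v x \<and> \<not> E w x}" and ?Y = "{y. E w y \<and> \<not> E v y}"
  have sym: "\<And>x y. E x y \<Longrightarrow> E y x" and irr: "\<And>x. \<not> E x x"
    and inV: "\<And>x y. E x y \<Longrightarrow> x \<in> V \<and> y \<in> V"
    using sg unfolding simple_graph_def by blast+
  have wv: "E w v" using sym vw .
  have icb: "induces_complete_bipartite V E (?X \<union> ?Y)"
    unfolding induces_complete_bipartite_def
  proof (rule conjI)
    show "?X \<union> ?Y \<subseteq> V" using inV by blast
    have a: "?Y \<noteq> {}" using wv irr by blast
    have b: "?X \<noteq> {}" using vw irr by blast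
    have c: "\<forall>x\<in>?Y. \<forall>y\<in>?Y. \<not> E x y" using nbw by blast
    have d: "\<forall>x\<in>?X. \<forall>y\<in>?X. \<not> E x y" using nbv by blast
    have e: "\<forall>x\<in>?Y. \<forall>y\<in>?X. E x y" using na sym by blast
    have f: "?Y \<inter> ?X = {}" by blast
    have g: "?X \<union> ?Y = ?Y \<union> ?X" by blast
    show "\<exists>A B. ?X \<union> ?Y = A \<union> B \<and> A \<inter> B = {} \<and> A \<noteq> {} \<and> B \<noteq> {} \<and>
        (\<forall>x\<in>A. \<forall>y\<in>A. \<not> E x y) \<and> (\<forall>x\<in>B. \<forall>y\<in>B. \<not> E x y) \<and>
        (\<forall>x\<in>A. \<forall>y\<in>B. E x y)"
      by (rule exI[of _ ?Y], rule exI[of _ ?X]) (intro conjI a b c d e f g)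
  qed
  have ss: "S \<subseteq> ?X \<union> ?Y"
  proof
    fix s assume s: "s \<in> S"
    from bS have "\<exists>A B. S = A \<union> B \<and> A \<inter> B = {} \<and> A \<noteq> {} \<and> B \<noteq> {} \<and>
        (\<forall>x\<in>A. \<forall>y\<in>A. \<not> E x y) \<and> (\<forall>x\<in>B. \<forall>y\<in>B. \<not> E x y) \<and>
        (\<forall>x\<in>A. \<forall>y\<in>B. E x y)"
      unfolding biclique_def induces_complete_bipartite_def by (elim conjE) assumption
    then obtain A B where S: "S = A \<union> B"
      and iA: "\<forall>x\<in>A. \<forall>y\<in>A. \<not> E x y" and iB: "\<forall>x\<in>B. \<forall>y\<in>B. \<not> E x y"
      and c: "\<forall>x\<in>A. \<forall>y\<in>B. E x y"
      by blast
    have vS: "v \<in> S" and wS: "w \<in> S" using sub by auto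
    show "s \<in> ?X \<union> ?Y"
    proof (cases "v \<in> A")
      case True
      have "w \<notin> A" using iA True vw by metis
      then have wB: "w \<in> B" using wS S by simp
      show ?thesis
      proof (cases "s \<in> A")
        case sA: True
        have "E s w" using c sA wB by blast
        moreover have "\<not> E v s" using iA True sA by blast
        ultimately show ?thesis using sym by blast
      next
        case False
        then have sB: "s \<in> B" using s S by simp
        have "E v s" using c True sB by blast
        moreover have "\<not> E w s" using iB wB sB by blast
        ultimately show ?thesis by blast
      qed
    next
      case False
      then have vB: "v \<in> B" using vS S by simp
      have "w \<notin> B" using iB vB vw by metis
      then have wA: "w \<in> A" using wS S by simp
      show ?thesis
      proof (cases "s \<in> A")
        case sA: True
        have "E s v" using c sA vB by blast
        moreover have "\<not> E w s" using iA wA sA by blast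
        ultimately show ?thesis using sym by blast
      next
        case False
        then have sB: "s \<in> B" using s S by simp
        have "E w s" using c wA sB by blast
        moreover have "\<not> E v s" using iB vB sB by blast
        ultimately show ?thesis by blast
      qed
    qed
  qed
  have "\<not> S \<subset> ?X \<union> ?Y" using bS icb unfolding biclique_def by blast
  with ss show ?thesis by blast
qed

theorem claim1:
  fixes V :: "'a set" and E :: "'a \<Rightarrow> 'a \<Rightarrow> bool" and v w :: 'a
  assumes "simple_graph V E"
    and "E v w"
    and "biclique V E S1" and "biclique V E S2" and "S1 \<noteq> S2"
    and "{v, w} \<subseteq> S1" and "{v, w} \<subseteq> S2"
  shows "\<exists>x y. {x, y} = {v, w} \<and>
           ((\<exists>x1 y1. E x x1 \<and> E y y1 \<and> \<not> E x y1 \<and> \<not> E y x1 \<and> \<not> E x1 y1) \<or>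
            (\<exists>x1 x2. E x x1 \<and> E x x2 \<and> E x1 x2 \<and> \<not> E y x1 \<and> \<not> E y x2))"
proof (rule ccontr)
  assume H: "\<not> ?thesis"
  have Hv: "\<not> ((\<exists>x1 y1. E v x1 \<and> E w y1 \<and> \<not> E v y1 \<and> \<not> E w x1 \<and> \<not> E x1 y1) \<or>
            (\<exists>x1 x2. E v x1 \<and> E v x2 \<and> E x1 x2 \<and> \<not> E w x1 \<and> \<not> E w x2))"
  proof
    assume "(\<exists>x1 y1. E v x1 \<and> E w y1 \<and> \<not> E v y1 \<and> \<not> E w x1 \<and> \<not> E x1 y1) \<or>
            (\<exists>x1 x2. E v x1 \<and> E v x2 \<and> E x1 x2 \<and> \<not> E w x1 \<and> \<not> E w x2)"
    then have "\<exists>x y. {x, y} = {v, w} \<and>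
           ((\<exists>x1 y1. E x x1 \<and> E y y1 \<and> \<not> E x y1 \<and> \<not> E y x1 \<and> \<not> E x1 y1) \<or>
            (\<exists>x1 x2. E x x1 \<and> E x x2 \<and> E x1 x2 \<and> \<not> E y x1 \<and> \<not> E y x2))"
      by (intro exI[of _ v] exI[of _ w]) simp
    with H show False by contradiction
  qed
  have Hw: "\<not> (\<exists>x1 x2. E w x1 \<and> E w x2 \<and> E x1 x2 \<and> \<not> E v x1 \<and> \<not> E v x2)"
  proof
    assume "\<exists>x1 x2. E w x1 \<and> E w x2 \<and> E x1 x2 \<and> \<not> E v x1 \<and> \<not> E v x2"
    then have "\<exists>x y. {x, y} = {v, w} \<and>
           ((\<exists>x1 y1. E x x1 \<and> E y y1 \<and> \<not> E x y1 \<and> \<not> E y x1 \<and> \<not> E x1 y1) \<or>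
            (\<exists>x1 x2. E x x1 \<and> E x x2 \<and> E x1 x2 \<and> \<not> E y x1 \<and> \<not> E y x2))"
      by (intro exI[of _ w] exI[of _ v]) (simp add: insert_commute)
    with H show False by contradiction
  qed
  have na: "\<And>x1 y1. E v x1 \<Longrightarrow> E w y1 \<Longrightarrow> \<not> E v y1 \<Longrightarrow> \<not> E w x1 \<Longrightarrow> E x1 y1"
    using Hv by blast
  have nbv: "\<And>x1 x2. E v x1 \<Longrightarrow> E v x2 \<Longrightarrow> \<not> E w x1 \<Longrightarrow> \<not> E w x2 \<Longrightarrow> \<not> E x1 x2"
    using Hv by blast
  have nbw: "\<And>x1 x2. E w x1 \<Longrightarrow> E w x2 \<Longrightarrow> \<not> E v x1 \<Longrightarrow> \<not> E v x2 \<Longrightarrow> \<not> E x1 x2"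
    using Hw by blast
  have "S1 = S2"
    using bic_eq[OF assms(1,2) na nbv nbw assms(3,6)] bic_eq[OF assms(1,2) na nbv nbw assms(4,7)]
    by simp
  with assms(5) show False by blast
qed

end
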